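(* Let $\mathfrak{sl}_2\langle\langle\lambda\rangle\rangle=\mathbb C[[\lambda^2]]h+\lambda\mathbb C[[\lambda^2]]e+\lambda\mathbb C[[\lambda^2]]f\subset\mathfrak{sl}_2[[\lambda]]$ (a Lie subalgebra) and $\mathfrak{sl}_2\langle\langle\lambda\rangle\rangle^L=\mathfrak{sl}_2\langle\langle\lambda\rangle\rangle\cap\lambda^L\mathfrak{sl}_2[[\lambda]]$ for $L\ge0$. Then there is a Lie algebra isomorphism $\widehat{\mathfrak{OA}}_1\cong\mathfrak{sl}_2\langle\langle\lambda\rangle\rangle$ which maps $\widehat{\mathfrak{OA}}_1^L$ onto $\mathfrak{sl}_2\langle\langle\lambda\rangle\rangle^L$ for every $L\ge0$, and hence induces isomorphisms $\mathfrak{OA}_{1,L}\cong\mathfrak{sl}_2\langle\langle\lambda\rangle\rangle/\mathfrak{sl}_2\langle\langle\lambda\rangle\rangle^L$ for all $L\ge0$.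
   Context: Work over $\mathbb C$. $\mathfrak{sl}_2$ has basis $e,f,h$ with $[e,f]=h$, $[h,e]=2e$, $[h,f]=-2f$; $\mathfrak{sl}_2[[\lambda]]=\mathbb C[[\lambda]]\otimes\mathfrak{sl}_2$. The Onsager algebra is the Lie subalgebra $\mathfrak{OA}=\{p(t)e+p(t^{-1})f+q(t)h:\ p,q\in\mathbb C[t,t^{-1}],\ q(t^{-1})=-q(t)\}$ of the loop algebra $\mathbb C[t,t^{-1}]\otimes\mathfrak{sl}_2$ (bracket $[px,qy]=pq[x,y]$). $\mathfrak I_{(t-1)^L}=\{p(t)e+p(t^{-1})f+q(t)h\in\mathfrak{OA}: p,q\in(t-1)^L\mathbb C[t,t^{-1}]\}$. For $L\ge1$, $\mathfrak{OA}_{1,L}=\mathfrak{OA}/\mathfrak I_{(t-1)^L}$, $\mathfrak{OA}_{1,0}=0$; for $L\ge K$ there are canonical surjections $\mathfrak{OA}_{1,L}\to\mathfrak{OA}_{1,K}$. $\widehat{\mathfrak{OA}}_1=\varprojlim_L\mathfrak{OA}_{1,L}$, $\psi_{1,L}:\widehat{\mathfrak{OA}}_1\to\mathfrak{OA}_{1,L}$ the canonical map, and $\widehat{\mathfrak{OA}}_1^L=\ker\psi_{1,L}$. *)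

theory Defs
  imports "HOL-Library.Product_Plus" "HOL-Library.Function_Algebras" "HOL-Computational_Algebra.Formal_Power_Series"
begin

definition coset :: "'a::ab_group_add set \<Rightarrow> 'a set \<Rightarrow> 'a \<Rightarrow> 'a set" where
  "coset A I x = {y \<in> A. y - x \<in> I}"

definition quot :: "'a::ab_group_add set \<Rightarrow> 'a set \<Rightarrow> 'a set set" where
  "quot A I = coset A I ` A"

definition qop2 :: "'a::ab_group_add set \<Rightarrow> 'a set \<Rightarrow> ('a \<Rightarrow> 'a \<Rightarrow> 'a) \<Rightarrow> 'a set \<Rightarrow> 'a set \<Rightarrow> 'a set" where
  "qop2 A I f C D = {z \<in> A. \<exists>x\<in>C. \<exists>y\<in>D. z - f x y \<in> I}"

definition qop1 :: "'a::ab_group_add set \<Rightarrow> 'a set \<Rightarrow> ('a \<Rightarrow> 'a) \<Rightarrow> 'a set \<Rightarrow> 'a set" where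
  "qop1 A I g C = {z \<in> A. \<exists>x\<in>C. z - g x \<in> I}"

definition is_lie_iso ::
  "'a set \<Rightarrow> ('a \<Rightarrow> 'a \<Rightarrow> 'a) \<Rightarrow> (complex \<Rightarrow> 'a \<Rightarrow> 'a) \<Rightarrow> ('a \<Rightarrow> 'a \<Rightarrow> 'a) \<Rightarrow>
   'b set \<Rightarrow> ('b \<Rightarrow> 'b \<Rightarrow> 'b) \<Rightarrow> (complex \<Rightarrow> 'b \<Rightarrow> 'b) \<Rightarrow> ('b \<Rightarrow> 'b \<Rightarrow> 'b) \<Rightarrow>
   ('a \<Rightarrow> 'b) \<Rightarrow> bool" where
  "is_lie_iso A add sm br B add' sm' br' \<Phi> \<longleftrightarrow>
     bij_betw \<Phi> A B \<and>
     (\<forall>x\<in>A. \<forall>y\<in>A. \<Phi> (add x y) = add' (\<Phi> x) (\<Phi> y)) \<and>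
     (\<forall>c. \<forall>x\<in>A. \<Phi> (sm c x) = sm' c (\<Phi> x)) \<and>
     (\<forall>x\<in>A. \<forall>y\<in>A. \<Phi> (br x y) = br' (\<Phi> x) (\<Phi> y))"

section \<open>Laurent polynomials C[t,t^-1] as finitely supported functions int => complex\<close>

type_synonym lp = "int \<Rightarrow> complex"

definition LP :: "lp set" where
  "LP = {p. finite {n. p n \<noteq> 0}}"

definition lmul :: "lp \<Rightarrow> lp \<Rightarrow> lp" where
  "lmul p q = (\<lambda>n. \<Sum>k | p k \<noteq> 0. p k * q (n - k))"

definition lscale :: "complex \<Rightarrow> lp \<Rightarrow> lp" where
  "lscale c p = (\<lambda>n. c * p n)"

definition lrefl :: "lp \<Rightarrow> lp" where
  "lrefl p = (\<lambda>n. p (- n))"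

definition lone :: lp where
  "lone = (\<lambda>n. if n = 0 then 1 else 0)"

definition tm1 :: lp where
  "tm1 = (\<lambda>n. if n = 1 then 1 else if n = 0 then -1 else 0)"

definition lpow :: "lp \<Rightarrow> nat \<Rightarrow> lp" where
  "lpow p L = (lmul p ^^ L) lone"

definition tm1_ideal :: "nat \<Rightarrow> lp set" where
  "tm1_ideal L = {p \<in> LP. \<exists>r\<in>LP. p = lmul (lpow tm1 L) r}"

section \<open>Loop algebra C[t,t^-1] \<otimes> sl2: triples (e-coeff, f-coeff, h-coeff)\<close>

type_synonym loop = "lp \<times> lp \<times> lp"

definition loop_br :: "loop \<Rightarrow> loop \<Rightarrow> loop" where
  "loop_br x y = (case x of (a, b, c) \<Rightarrow> case y of (a', b', c') \<Rightarrow>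
     (lscale 2 (lmul c a' - lmul a c'),
      lscale 2 (lmul b c' - lmul c b'),
      lmul a b' - lmul b a'))"

definition loop_scale :: "complex \<Rightarrow> loop \<Rightarrow> loop" where
  "loop_scale c x = (case x of (a, b, d) \<Rightarrow> (lscale c a, lscale c b, lscale c d))"

definition OA :: "loop set" where
  "OA = {(p, lrefl p, q) | p q. p \<in> LP \<and> q \<in> LP \<and> lrefl q = - q}"

definition OA_ideal :: "nat \<Rightarrow> loop set" where
  "OA_ideal L = {(p, lrefl p, q) | p q. (p, lrefl p, q) \<in> OA \<and> p \<in> tm1_ideal L \<and> q \<in> tm1_ideal L}"

text \<open>OA_{1,L} = OA / I_{(t-1)^L}; for L = 0 the ideal is all of OA, so the quotient is 0.\<close>
definition OA_quot :: "nat \<Rightarrow> loop set set" where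
  "OA_quot L = quot OA (OA_ideal L)"

definition OAq_add :: "nat \<Rightarrow> loop set \<Rightarrow> loop set \<Rightarrow> loop set" where
  "OAq_add L = qop2 OA (OA_ideal L) (+)"

definition OAq_scale :: "nat \<Rightarrow> complex \<Rightarrow> loop set \<Rightarrow> loop set" where
  "OAq_scale L c = qop1 OA (OA_ideal L) (loop_scale c)"

definition OAq_br :: "nat \<Rightarrow> loop set \<Rightarrow> loop set \<Rightarrow> loop set" where
  "OAq_br L = qop2 OA (OA_ideal L) loop_br"

definition OA_proj :: "nat \<Rightarrow> loop set \<Rightarrow> loop set" where
  "OA_proj K C = {y \<in> OA. \<exists>x\<in>C. y - x \<in> OA_ideal K}"

definition OAhat :: "(nat \<Rightarrow> loop set) set" where
  "OAhat = {X. (\<forall>L. X L \<in> OA_quot L) \<and> (\<forall>L K. K \<le> L \<longrightarrow> OA_proj K (X L) = X K)}"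

definition OAhat_add :: "(nat \<Rightarrow> loop set) \<Rightarrow> (nat \<Rightarrow> loop set) \<Rightarrow> (nat \<Rightarrow> loop set)" where
  "OAhat_add X Y = (\<lambda>L. OAq_add L (X L) (Y L))"

definition OAhat_scale :: "complex \<Rightarrow> (nat \<Rightarrow> loop set) \<Rightarrow> (nat \<Rightarrow> loop set)" where
  "OAhat_scale c X = (\<lambda>L. OAq_scale L c (X L))"

definition OAhat_br :: "(nat \<Rightarrow> loop set) \<Rightarrow> (nat \<Rightarrow> loop set) \<Rightarrow> (nat \<Rightarrow> loop set)" where
  "OAhat_br X Y = (\<lambda>L. OAq_br L (X L) (Y L))"

definition psi :: "nat \<Rightarrow> (nat \<Rightarrow> loop set) \<Rightarrow> loop set" where
  "psi L X = X L"

definition OAhat_filt :: "nat \<Rightarrow> (nat \<Rightarrow> loop set) set" where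
  "OAhat_filt L = {X \<in> OAhat. psi L X = coset OA (OA_ideal L) 0}"

section \<open>sl2[[lambda]] as triples (e-coeff, f-coeff, h-coeff) of formal power series\<close>

type_synonym sl = "complex fps \<times> complex fps \<times> complex fps"

definition sl_br :: "sl \<Rightarrow> sl \<Rightarrow> sl" where
  "sl_br x y = (case x of (a, b, c) \<Rightarrow> case y of (a', b', c') \<Rightarrow>
     (2 * (c * a' - a * c'), 2 * (b * c' - c * b'), a * b' - b * a'))"

definition sl_scale :: "complex \<Rightarrow> sl \<Rightarrow> sl" where
  "sl_scale c x = (case x of (a, b, d) \<Rightarrow> (fps_const c * a, fps_const c * b, fps_const c * d))"

definition slLL :: "sl set" where
  "slLL = {(a, b, d). \<forall>n. (even n \<longrightarrow> fps_nth a n = 0 \<and> fps_nth b n = 0) \<and>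
                            (odd n \<longrightarrow> fps_nth d n = 0)}"

definition slLL_filt :: "nat \<Rightarrow> sl set" where
  "slLL_filt L = {(a, b, d) \<in> slLL. \<forall>n<L. fps_nth a n = 0 \<and> fps_nth b n = 0 \<and> fps_nth d n = 0}"

end

theory Submission
  imports Defs
begin

unbundle fps_syntax


abbreviation supp :: "lp \<Rightarrow> int set" where "supp p \<equiv> {n. p n \<noteq> 0}"

lemma LP_iff: "p \<in> LP \<longleftrightarrow> finite (supp p)" by (simp add: LP_def)

lemma lmul_sup:
  assumes "finite S" "supp p \<subseteq> S"
  shows "lmul p q n = (\<Sum>k\<in>S. p k * q (n - k))"
  unfolding lmul_def
  by (rule sum.mono_neutral_left) (use assms in auto)

lemma LP_add: "p \<in> LP \<Longrightarrow> q \<in> LP \<Longrightarrow> p + q \<in> LP"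
  unfolding LP_iff by (rule finite_subset[of _ "supp p \<union> supp q"]) auto
lemma LP_diff: "p \<in> LP \<Longrightarrow> q \<in> LP \<Longrightarrow> p - q \<in> LP"
  unfolding LP_iff by (rule finite_subset[of _ "supp p \<union> supp q"]) auto
lemma LP_uminus: "p \<in> LP \<Longrightarrow> - p \<in> LP"
  unfolding LP_iff by simp
lemma LP_zero: "0 \<in> LP" unfolding LP_iff by simp
lemma LP_lscale: "p \<in> LP \<Longrightarrow> lscale c p \<in> LP"
  unfolding LP_iff lscale_def by (rule finite_subset[of _ "supp p"]) auto
lemma supp_lrefl: "supp (lrefl p) = uminus ` supp p"
  unfolding lrefl_def by (auto simp: image_iff) (metis minus_minus)
lemma LP_lrefl: "p \<in> LP \<Longrightarrow> lrefl p \<in> LP"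
  unfolding LP_iff supp_lrefl by simp
lemma lrefl_lrefl[simp]: "lrefl (lrefl p) = p" unfolding lrefl_def by simp

lemma LP_lmul: assumes "p \<in> LP" "q \<in> LP" shows "lmul p q \<in> LP"
proof -
  have "supp (lmul p q) \<subseteq> (\<lambda>(a,b). a + b) ` (supp p \<times> supp q)"
  proof
    fix n assume "n \<in> supp (lmul p q)"
    then obtain k where "p k \<noteq> 0" "q (n - k) \<noteq> 0" unfolding lmul_def
      by (metis (mono_tags, lifting) mem_Collect_eq mult_eq_0_iff sum.neutral)
    then show "n \<in> (\<lambda>(a,b). a + b) ` (supp p \<times> supp q)"
      by (auto simp: image_iff) (metis add.commute diff_add_cancel)
  qed
  then show ?thesis using assms unfolding LP_iff
    by (meson finite_SigmaI finite_imageI finite_subset)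
qed

lemma LP_lone: "lone \<in> LP" unfolding LP_iff lone_def
  by (rule finite_subset[of _ "{0}"]) auto
lemma LP_tm1: "tm1 \<in> LP" unfolding LP_iff tm1_def
  by (rule finite_subset[of _ "{0,1}"]) auto

lemma lmul_lone: "lmul lone r = r"
  by (rule ext) (simp add: lmul_sup[of "{0}"] lone_def)

lemma lmul_tm1: "lmul tm1 r n = r (n - 1) - r n"
proof -
  have "lmul tm1 r n = (\<Sum>k\<in>{0,1}. tm1 k * r (n - k))"
    by (rule lmul_sup) (auto simp: tm1_def)
  then show ?thesis by (simp add: tm1_def)
qed

lemma lmul_tm1_fun: "lmul tm1 r = (\<lambda>n. r (n - 1) - r n)"
  by (rule ext) (rule lmul_tm1)

lemma lpow_Suc: "lpow p (Suc L) = lmul p (lpow p L)"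
  by (simp add: lpow_def)
lemma lpow_0: "lpow p 0 = lone" by (simp add: lpow_def)
lemma LP_lpow: "p \<in> LP \<Longrightarrow> lpow p L \<in> LP"
  by (induction L) (auto simp: lpow_0 lpow_Suc LP_lone LP_lmul)

lemma lmul_uminus_left: "lmul (- p) q = - lmul p q"
  unfolding lmul_def by (rule ext) (simp add: sum_negf)

lemma lmul_lrefl: "lrefl (lmul p q) = lmul (lrefl p) (lrefl q)"
proof (rule ext)
  fix n
  have "lmul (lrefl p) (lrefl q) n = (\<Sum>k\<in>uminus ` supp p. p (- k) * q (k - n))"
    unfolding lmul_def supp_lrefl[symmetric] by (simp add: lrefl_def)
  also have "\<dots> = (\<Sum>k\<in>supp p. p k * q (- n - k))"
    by (subst sum.reindex) (auto simp: inj_on_def intro!: sum.cong arg_cong[where f=q])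
  finally show "lrefl (lmul p q) n = lmul (lrefl p) (lrefl q) n"
    by (simp add: lrefl_def lmul_def)
qed

lemma lmul_tm1_assoc:
  assumes "A \<in> LP"
  shows "lmul (lmul tm1 A) r = lmul tm1 (lmul A r)"
proof (rule ext)
  fix n
  define S where "S = supp A \<union> (\<lambda>k. k + 1) ` supp A"
  have fS: "finite S" using assms by (simp add: S_def LP_iff)
  have s1: "supp (lmul tm1 A) \<subseteq> S"
  proof
    fix k assume "k \<in> supp (lmul tm1 A)"
    then have "A (k - 1) \<noteq> 0 \<or> A k \<noteq> 0" by (auto simp: lmul_tm1)
    then show "k \<in> S" unfolding S_def by (auto simp: image_iff intro: bexI[of _ "k - 1"])
  qed
  have "lmul (lmul tm1 A) r n = (\<Sum>k\<in>S. (A (k - 1) - A k) * r (n - k))"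
    using lmul_sup[OF fS s1, of r n] unfolding lmul_tm1_fun by simp
  also have "\<dots> = (\<Sum>k\<in>S. A (k - 1) * r (n - k)) - (\<Sum>k\<in>S. A k * r (n - k))"
    by (simp add: left_diff_distrib sum_subtractf)
  also have "(\<Sum>k\<in>S. A k * r (n - k)) = lmul A r n"
    by (rule lmul_sup[symmetric]) (use fS in \<open>auto simp: S_def\<close>)
  also have "(\<Sum>k\<in>S. A (k - 1) * r (n - k)) = (\<Sum>k\<in>(\<lambda>k. k - 1) ` S. A k * r (n - 1 - k))"
    by (subst sum.reindex) (auto simp: inj_on_def algebra_simps)
  also have "\<dots> = lmul A r (n - 1)"
  proof (rule lmul_sup[symmetric])
    show "finite ((\<lambda>k. k - 1) ` S)" using fS by simp
    show "supp A \<subseteq> (\<lambda>k. k - 1) ` S"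
    proof
      fix x assume "x \<in> supp A"
      then have "x + 1 \<in> S" unfolding S_def by blast
      then show "x \<in> (\<lambda>k. k - 1) ` S" by (rule rev_image_eqI) simp
    qed
  qed
  finally show "lmul (lmul tm1 A) r n = lmul tm1 (lmul A r) n"
    by (simp add: lmul_tm1_fun)
qed


definition EE :: "int \<Rightarrow> complex fps" where "EE k = fps_exp (of_int k)"

lemma EE_add: "EE (a + b) = EE a * EE b"
  unfolding EE_def by (simp add: fps_exp_add_mult)

definition ev :: "lp \<Rightarrow> complex fps" where
  "ev p = (\<Sum>k\<in>supp p. fps_const (p k) * EE k)"

lemma ev_sup:
  assumes "finite S" "supp p \<subseteq> S"
  shows "ev p = (\<Sum>k\<in>S. fps_const (p k) * EE k)"
  unfolding ev_def by (rule sum.mono_neutral_left) (use assms in auto)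

lemma ev_nth: "ev p $ j = (\<Sum>k\<in>supp p. p k * of_int k ^ j) / fact j"
  unfolding ev_def fps_sum_nth by (simp add: EE_def sum_divide_distrib)

lemma ev_add: assumes "p \<in> LP" "q \<in> LP" shows "ev (p + q) = ev p + ev q"
proof -
  let ?S = "supp p \<union> supp q"
  have f: "finite ?S" using assms by (simp add: LP_iff)
  show ?thesis
    by (subst (1 2 3) ev_sup[OF f]) (auto simp: sum.distrib distrib_right simp flip: fps_const_add)
qed

lemma ev_diff: assumes "p \<in> LP" "q \<in> LP" shows "ev (p - q) = ev p - ev q"
proof -
  let ?S = "supp p \<union> supp q"
  have f: "finite ?S" using assms by (simp add: LP_iff)
  show ?thesis
    by (subst (1 2 3) ev_sup[OF f]) (auto simp: sum_subtractf left_diff_distrib simp flip: fps_const_sub)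
qed

lemma ev_uminus: "ev (- p) = - ev p"
  unfolding ev_def by (simp add: sum_negf flip: fps_const_neg)

lemma ev_zero: "ev 0 = 0" unfolding ev_def by simp

lemma ev_lscale: assumes "p \<in> LP" shows "ev (lscale c p) = fps_const c * ev p"
proof -
  have f: "finite (supp p)" using assms by (simp add: LP_iff)
  show ?thesis
    by (subst (1 2) ev_sup[OF f]) (auto simp: lscale_def sum_distrib_left mult.assoc simp flip: fps_const_mult)
qed

lemma ev_lone: "ev lone = 1"
  by (subst ev_sup[of "{0}"]) (auto simp: lone_def EE_def)

lemma ev_tm1: "ev tm1 = EE 1 - 1"
  by (subst ev_sup[of "{0,1}"]) (auto simp: tm1_def EE_def simp flip: fps_const_neg)

lemma ev_lrefl_nth: "ev (lrefl p) $ j = (-1) ^ j * ev p $ j"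
proof -
  have "(\<Sum>k\<in>supp (lrefl p). lrefl p k * of_int k ^ j) = (\<Sum>k\<in>uminus ` supp p. p (- k) * of_int k ^ j)"
    by (simp only: supp_lrefl) (simp add: lrefl_def)
  also have "\<dots> = (\<Sum>k\<in>supp p. p k * of_int (- k) ^ j)"
    by (subst sum.reindex) (simp_all add: inj_on_def)
  also have "\<dots> = (\<Sum>k\<in>supp p. (-1) ^ j * (p k * of_int k ^ j))"
    by (rule sum.cong[OF refl]) (metis mult.left_commute of_int_minus power_minus)
  also have "\<dots> = (-1) ^ j * (\<Sum>k\<in>supp p. p k * of_int k ^ j)"
    by (rule sum_distrib_left[symmetric])
  finally show ?thesis unfolding ev_nth by simp
qed

lemma fpsc_sum: "fps_const (sum f S) = (\<Sum>x\<in>S. fps_const (f x :: complex))"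
  by (induction S rule: infinite_finite_induct) (auto simp flip: fps_const_add)

lemma ev_lmul: assumes "p \<in> LP" "q \<in> LP" shows "ev (lmul p q) = ev p * ev q"
proof -
  define S where "S = supp p \<union> supp q"
  have fS: "finite S" using assms by (simp add: LP_iff S_def)
  define S2 where "S2 = (\<lambda>(a,b). a + b) ` (S \<times> S)"
  have fS2: "finite S2" using fS by (simp add: S2_def)
  have sub2: "supp (lmul p q) \<subseteq> S2"
  proof
    fix n assume "n \<in> supp (lmul p q)"
    then obtain k where "p k \<noteq> 0" "q (n - k) \<noteq> 0" unfolding lmul_def
      by (metis (mono_tags, lifting) mem_Collect_eq mult_eq_0_iff sum.neutral)
    then have "(k, n - k) \<in> S \<times> S" by (auto simp: S_def)
    then show "n \<in> S2" unfolding S2_def by (rule rev_image_eqI) simp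
  qed
  have lm: "lmul p q n = (\<Sum>k\<in>S. p k * q (n - k))" for n
    by (rule lmul_sup) (use fS in \<open>auto simp: S_def\<close>)
  have "ev (lmul p q) = (\<Sum>n\<in>S2. fps_const (\<Sum>k\<in>S. p k * q (n - k)) * EE n)"
    by (subst ev_sup[OF fS2 sub2]) (simp add: lm)
  also have "\<dots> = (\<Sum>n\<in>S2. \<Sum>k\<in>S. fps_const (p k) * (fps_const (q (n - k)) * EE n))"
    by (simp add: fpsc_sum sum_distrib_right mult.assoc flip: fps_const_mult)
  also have "\<dots> = (\<Sum>k\<in>S. \<Sum>n\<in>S2. fps_const (p k) * (fps_const (q (n - k)) * EE n))"
    by (rule sum.swap)
  also have "\<dots> = (\<Sum>k\<in>S. fps_const (p k) * EE k * ev q)"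
  proof (rule sum.cong[OF refl])
    fix k assume k: "k \<in> S"
    have "(\<Sum>n\<in>S2. fps_const (q (n - k)) * EE n) = (\<Sum>m\<in>(\<lambda>n. n - k) ` S2. fps_const (q m) * EE (m + k))"
      by (subst sum.reindex) (auto simp: inj_on_def)
    also have "\<dots> = (\<Sum>m\<in>(\<lambda>n. n - k) ` S2. fps_const (q m) * EE m) * EE k"
      by (simp add: EE_add sum_distrib_right mult.assoc)
    also have "(\<Sum>m\<in>(\<lambda>n. n - k) ` S2. fps_const (q m) * EE m) = ev q"
    proof (rule ev_sup[symmetric])
      show "finite ((\<lambda>n. n - k) ` S2)" using fS2 by simp
      show "supp q \<subseteq> (\<lambda>n. n - k) ` S2"
      proof
        fix m assume "m \<in> supp q"
        then have "(k, m) \<in> S \<times> S" using k by (auto simp: S_def)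
        then have "k + m \<in> S2" unfolding S2_def by (rule rev_image_eqI) simp
        then show "m \<in> (\<lambda>n. n - k) ` S2" by (rule rev_image_eqI) simp
      qed
    qed
    finally have "(\<Sum>n\<in>S2. fps_const (q (n - k)) * EE n) = EE k * ev q" by (simp add: mult_ac)
    then show "(\<Sum>n\<in>S2. fps_const (p k) * (fps_const (q (n - k)) * EE n)) = fps_const (p k) * EE k * ev q"
      by (metis (no_types) sum_distrib_left mult.assoc)
  qed
  also have "\<dots> = ev p * ev q"
    by (subst ev_sup[OF fS, of p]) (auto simp: S_def sum_distrib_right)
  finally show ?thesis .
qed


abbreviation FF :: "complex fps" where "FF \<equiv> EE 1 - 1"

lemma FF0: "FF $ 0 = 0" by (simp add: EE_def)
lemma FF1: "FF $ 1 = 1" by (simp add: EE_def)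

lemma ev_lpow: "ev (lpow tm1 L) = FF ^ L"
  by (induction L) (simp_all add: lpow_0 lpow_Suc ev_lone ev_lmul LP_tm1 LP_lpow ev_tm1)

lemma FF_pow_less: "j < L \<Longrightarrow> (FF ^ L) $ j = 0"
  using startsby_zero_power_prefix[OF FF0] by blast
lemma FF_pow_same: "(FF ^ L) $ L = 1"
  using startsby_zero_power_nth_same[OF FF0, of L] by (simp add: EE_def)

lemma prefix_mult:
  fixes A H :: "complex fps"
  assumes "\<forall>i<L. H $ i = 0" "j < L"
  shows "(A * H) $ j = 0"
  unfolding fps_mult_nth using assms by (intro sum.neutral) auto

lemma ideal_ev:
  assumes "p \<in> tm1_ideal L" "j < L"
  shows "ev p $ j = 0"
proof -
  obtain r where r: "r \<in> LP" "p = lmul (lpow tm1 L) r" using assms unfolding tm1_ideal_def by auto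
  then have "ev p = ev r * FF ^ L" by (simp add: ev_lmul LP_lpow LP_tm1 ev_lpow mult.commute)
  then show ?thesis using prefix_mult[of L "FF ^ L" j "ev r"] FF_pow_less assms(2) by simp
qed

lemma jets: "\<exists>p\<in>LP. \<forall>j<L. ev p $ j = a j"
proof (induction L)
  case 0 then show ?case using LP_zero by blast
next
  case (Suc L)
  then obtain p where p: "p \<in> LP" "\<forall>j<L. ev p $ j = a j" by blast
  define c where "c = a L - ev p $ L"
  define p' where "p' = p + lscale c (lpow tm1 L)"
  have LPl: "lpow tm1 L \<in> LP" by (simp add: LP_lpow LP_tm1)
  have "p' \<in> LP" unfolding p'_def by (intro LP_add LP_lscale p LPl)
  moreover have "ev p' = ev p + fps_const c * FF ^ L"
    unfolding p'_def by (simp add: ev_add p LP_lscale LPl ev_lscale ev_lpow)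
  then have "\<forall>j<Suc L. ev p' $ j = a j"
    using p(2) FF_pow_less FF_pow_same by (auto simp: c_def less_Suc_eq)
  ultimately show ?case by blast
qed

lemma ev_nth0: "ev p $ 0 = (\<Sum>k\<in>supp p. p k)"
  by (simp add: ev_nth)

lemma division:
  assumes "p \<in> LP" "ev p $ 0 = 0"
  shows "\<exists>r\<in>LP. lmul tm1 r = p"
proof -
  have fin: "finite (supp p)" using assms by (simp add: LP_iff)
  have s0: "(\<Sum>k\<in>supp p. p k) = 0" using assms(2) by (simp add: ev_nth0)
  define r where "r n = - (\<Sum>k\<in>{k\<in>supp p. k \<le> n}. p k)" for n
  have "lmul tm1 r n = p n" for n
  proof -
    have "lmul tm1 r n = (\<Sum>k\<in>{k\<in>supp p. k \<le> n}. p k) - (\<Sum>k\<in>{k\<in>supp p. k \<le> n - 1}. p k)"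
      by (simp add: lmul_tm1 r_def)
    also have "\<dots> = p n"
    proof (cases "p n = 0")
      case True
      then have "{k\<in>supp p. k \<le> n} = {k\<in>supp p. k \<le> n - 1}"
        by (smt (verit) Collect_cong mem_Collect_eq)
      then show ?thesis using True by simp
    next
      case False
      then have e: "{k\<in>supp p. k \<le> n} = insert n {k\<in>supp p. k \<le> n - 1}" by force
      have "finite {k\<in>supp p. k \<le> n - 1}" using fin by simp
      then show ?thesis unfolding e by (subst sum.insert) auto
    qed
    finally show ?thesis .
  qed
  moreover have "r \<in> LP"
  proof -
    define m where "m = Min (insert 0 (supp p))"
    define M where "M = Max (insert 0 (supp p))"
    have "supp r \<subseteq> {m..M}"
    proof
      fix n assume n: "n \<in> supp r"
      have "\<not> n < m"
      proof
        assume "n < m"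
        then have "{k\<in>supp p. k \<le> n} = {}" using fin by (force simp: m_def)
        then have "r n = 0" unfolding r_def by (simp only: sum.empty) simp
        then show False using n by simp
      qed
      moreover have "\<not> n > M"
      proof
        assume "n > M"
        then have "{k\<in>supp p. k \<le> n} = supp p" using fin by (force simp: M_def)
        then have "r n = 0" unfolding r_def using s0 by (simp only:) simp
        then show False using n by simp
      qed
      ultimately show "n \<in> {m..M}" by simp
    qed
    then show ?thesis unfolding LP_iff by (rule finite_subset) simp
  qed
  ultimately show ?thesis by blast
qed

lemma cancel_FF:
  assumes "\<forall>j<Suc L. (FF * G) $ j = 0"
  shows "\<forall>j<L. G $ j = 0"
proof -
  define U where "U = fps_shift 1 FF"
  have FU: "FF = U * fps_X" unfolding U_def by (rule fps_ext) (simp add: EE_def)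
  have U0: "U $ 0 \<noteq> 0" by (simp add: U_def EE_def)
  have H: "\<forall>j<L. (U * G) $ j = 0"
  proof (intro allI impI)
    fix j assume "j < L"
    then have "(FF * G) $ Suc j = 0" using assms by simp
    then show "(U * G) $ j = 0" unfolding FU by (simp add: mult.commute mult.left_commute)
  qed
  have "G = inverse U * (U * G)" using inverse_mult_eq_1[OF U0] by (simp add: mult.assoc[symmetric])
  then show ?thesis using prefix_mult[OF H] by metis
qed

lemma ev_ideal:
  assumes "p \<in> LP" "\<forall>j<L. ev p $ j = 0"
  shows "p \<in> tm1_ideal L"
  using assms
proof (induction L arbitrary: p)
  case 0
  then show ?case unfolding tm1_ideal_def by (auto simp: lpow_0 lmul_lone intro!: bexI[of _ p])
next
  case (Suc L)
  then obtain r where r: "r \<in> LP" "lmul tm1 r = p" using division by blast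
  then have "ev p = FF * ev r" by (metis ev_lmul LP_tm1 ev_tm1)
  then have "\<forall>j<L. ev r $ j = 0" using cancel_FF Suc.prems(2) by metis
  then have "r \<in> tm1_ideal L" using Suc.IH r(1) by blast
  then obtain r' where r': "r' \<in> LP" "r = lmul (lpow tm1 L) r'" unfolding tm1_ideal_def by auto
  have "p = lmul (lpow tm1 (Suc L)) r'"
    using r r' by (simp add: lpow_Suc lmul_tm1_assoc LP_lpow LP_tm1)
  then show ?case unfolding tm1_ideal_def using Suc.prems(1) r'(1) by blast
qed

lemma ideal_iff: "p \<in> LP \<Longrightarrow> p \<in> tm1_ideal L \<longleftrightarrow> (\<forall>j<L. ev p $ j = 0)"
  using ideal_ev ev_ideal by blast


definition h2 :: "complex fps" where "h2 = fps_const (1/2)"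

definition iota :: "loop \<Rightarrow> sl" where
  "iota x = (case x of (p, b, q) \<Rightarrow>
     (ev q + h2 * (ev b - ev p), ev q + h2 * (ev p - ev b), h2 * (ev p + ev b)))"

lemma h2_2: "h2 * 2 = 1"
  unfolding h2_def by (simp add: numeral_fps_const flip: fps_const_1_eq_1)

lemma OA_iff: "x \<in> OA \<longleftrightarrow> (\<exists>p q. x = (p, lrefl p, q) \<and> p \<in> LP \<and> q \<in> LP \<and> lrefl q = - q)"
  unfolding OA_def by blast

lemma lrefl_add: "lrefl (p + q) = lrefl p + lrefl q" unfolding lrefl_def by auto
lemma lrefl_diff: "lrefl (p - q) = lrefl p - lrefl q" unfolding lrefl_def by auto
lemma lrefl_uminus: "lrefl (- p) = - lrefl p" unfolding lrefl_def by auto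
lemma lrefl_lscale: "lrefl (lscale c p) = lscale c (lrefl p)" unfolding lrefl_def lscale_def by auto
lemma lscale_uminus: "lscale c (- p) = - lscale c p" unfolding lscale_def by auto
lemma lscale_diff: "lscale c (p - q) = lscale c p - lscale c q" unfolding lscale_def by (auto simp: algebra_simps)
lemma lmul_uminus_right: "lmul p (- q) = - lmul p q"
  unfolding lmul_def by (rule ext) (simp add: sum_negf)
lemma lrefl_zero: "lrefl 0 = 0" unfolding lrefl_def by auto

lemma OA_zero: "0 \<in> OA"
  unfolding OA_iff by (rule exI[of _ 0], rule exI[of _ 0]) (simp add: lrefl_zero LP_zero zero_prod_def)

lemma OA_add: "x \<in> OA \<Longrightarrow> y \<in> OA \<Longrightarrow> x + y \<in> OA"
  unfolding OA_iff by (auto simp: lrefl_add LP_add) 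

lemma OA_diff: "x \<in> OA \<Longrightarrow> y \<in> OA \<Longrightarrow> x - y \<in> OA"
  unfolding OA_iff by (auto simp: lrefl_diff LP_diff) 

lemma OA_scale: "x \<in> OA \<Longrightarrow> loop_scale c x \<in> OA"
  unfolding OA_iff by (auto simp: loop_scale_def lrefl_lscale LP_lscale lscale_uminus) 

lemma OA_br: "x \<in> OA \<Longrightarrow> y \<in> OA \<Longrightarrow> loop_br x y \<in> OA"
  unfolding OA_iff
  apply (clarsimp simp: loop_br_def)
  apply (intro conjI)
  apply (simp_all add: lrefl_lscale lrefl_diff lmul_lrefl lmul_uminus_left lmul_uminus_right LP_lscale LP_diff LP_lmul LP_lrefl lscale_diff lscale_uminus)
  done


lemma iota_add: "x \<in> OA \<Longrightarrow> y \<in> OA \<Longrightarrow> iota (x + y) = iota x + iota y"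
  unfolding OA_iff by (auto simp: iota_def ev_add LP_lrefl algebra_simps)

lemma iota_diff: "x \<in> OA \<Longrightarrow> y \<in> OA \<Longrightarrow> iota (x - y) = iota x - iota y"
  unfolding OA_iff by (auto simp: iota_def ev_diff LP_lrefl algebra_simps)

lemma iota_zero: "iota 0 = 0"
  by (simp add: iota_def zero_prod_def ev_zero)

lemma iota_scale: "x \<in> OA \<Longrightarrow> iota (loop_scale c x) = sl_scale c (iota x)"
  unfolding OA_iff by (auto simp: iota_def loop_scale_def sl_scale_def ev_lscale LP_lrefl algebra_simps)

lemma iota_br: assumes "x \<in> OA" "y \<in> OA" shows "iota (loop_br x y) = sl_br (iota x) (iota y)"
proof -
  obtain p q where x: "x = (p, lrefl p, q)" "p \<in> LP" "q \<in> LP" using assms(1) unfolding OA_iff by blast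
  obtain p' q' where y: "y = (p', lrefl p', q')" "p' \<in> LP" "q' \<in> LP" using assms(2) unfolding OA_iff by blast
  have L: "lrefl p \<in> LP" "lrefl p' \<in> LP" using x y by (simp_all add: LP_lrefl)
  define P where "P = ev p"
  define B where "B = ev (lrefl p)"
  define Q where "Q = ev q"
  define P' where "P' = ev p'"
  define B' where "B' = ev (lrefl p')"
  define Q' where "Q' = ev q'"
  have e: "iota (loop_br x y) = ((P * B' - B * P') + h2 * (2 * (B * Q' - Q * B') - 2 * (Q * P' - P * Q')),
     (P * B' - B * P') + h2 * (2 * (Q * P' - P * Q') - 2 * (B * Q' - Q * B')),
     h2 * (2 * (Q * P' - P * Q') + 2 * (B * Q' - Q * B')))"
    using x y L unfolding iota_def loop_br_def
    by (simp add: ev_lscale ev_diff ev_lmul LP_lmul LP_diff P_def B_def Q_def P'_def B'_def Q'_def numeral_fps_const)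
  have r: "sl_br (iota x) (iota y) = sl_br (Q + h2 * (B - P), Q + h2 * (P - B), h2 * (P + B))
     (Q' + h2 * (B' - P'), Q' + h2 * (P' - B'), h2 * (P' + B'))"
    using x y unfolding iota_def P_def B_def Q_def P'_def B'_def Q'_def by simp
  show ?thesis unfolding e r unfolding sl_br_def prod.case prod.inject
    by (intro conjI) (use h2_2 in algebra | algebra | simp add: algebra_simps)+
qed


definition par :: "bool \<Rightarrow> complex fps \<Rightarrow> bool" where
  "par e F \<longleftrightarrow> (\<forall>n. F $ n \<noteq> 0 \<longrightarrow> (even n \<longleftrightarrow> e))"

definition pz :: "nat \<Rightarrow> complex fps \<Rightarrow> bool" where
  "pz L F \<longleftrightarrow> (\<forall>n<L. F $ n = 0)"

definition Jraw :: "nat \<Rightarrow> sl set" where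
  "Jraw L = {(a, b, d). pz L a \<and> pz L b \<and> pz L d}"

lemma slLL_iff: "(a, b, d) \<in> slLL \<longleftrightarrow> par False a \<and> par False b \<and> par True d"
  unfolding slLL_def par_def by auto

lemma filt_eq: "slLL_filt L = slLL \<inter> Jraw L"
  unfolding slLL_filt_def Jraw_def pz_def by auto

lemma par_add: "par e F \<Longrightarrow> par e G \<Longrightarrow> par e (F + G)"
  unfolding par_def by (metis add.right_neutral fps_add_nth)
lemma par_diff: "par e F \<Longrightarrow> par e G \<Longrightarrow> par e (F - G)"
  unfolding par_def by (metis diff_zero diff_self fps_sub_nth)
lemma par_const: "par e F \<Longrightarrow> par e (fps_const c * F)"
  unfolding par_def by simp
lemma par_2: "par e F \<Longrightarrow> par e (2 * F)"
  unfolding par_def by (simp add: numeral_fps_const)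
lemma par_zero: "par e 0" unfolding par_def by simp

lemma par_mult: assumes "par e F" "par e' G" shows "par (e = e') (F * G)"
  unfolding par_def
proof (intro allI impI)
  fix n assume "(F * G) $ n \<noteq> 0"
  then obtain i where i: "i \<in> {0..n}" "F $ i * G $ (n - i) \<noteq> 0"
    unfolding fps_mult_nth by (meson sum.neutral)
  then have "even i \<longleftrightarrow> e" "even (n - i) \<longleftrightarrow> e'" using assms unfolding par_def by auto
  moreover have "even n \<longleftrightarrow> (even i \<longleftrightarrow> even (n - i))" using i(1) by auto
  ultimately show "even n \<longleftrightarrow> (e = e')" by blast
qed

lemma pz_add: "pz L F \<Longrightarrow> pz L G \<Longrightarrow> pz L (F + G)" unfolding pz_def by simp
lemma pz_diff: "pz L F \<Longrightarrow> pz L G \<Longrightarrow> pz L (F - G)" unfolding pz_def by simp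
lemma pz_const: "pz L F \<Longrightarrow> pz L (fps_const c * F)" unfolding pz_def by simp
lemma pz_2: "pz L F \<Longrightarrow> pz L (2 * F)" unfolding pz_def by (simp add: numeral_fps_const)
lemma pz_multR: "pz L F \<Longrightarrow> pz L (G * F)" unfolding pz_def using prefix_mult by blast
lemma pz_multL: "pz L F \<Longrightarrow> pz L (F * G)" using pz_multR[of L F G] by (simp add: mult.commute)
lemma pz_mono: "K \<le> L \<Longrightarrow> pz L F \<Longrightarrow> pz K F" unfolding pz_def by simp

lemma slLL_add: "x \<in> slLL \<Longrightarrow> y \<in> slLL \<Longrightarrow> x + y \<in> slLL"
  by (cases x; cases y) (simp add: slLL_iff par_add)
lemma slLL_diff: "x \<in> slLL \<Longrightarrow> y \<in> slLL \<Longrightarrow> x - y \<in> slLL"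
  by (cases x; cases y) (simp add: slLL_iff par_diff)
lemma slLL_zero: "0 \<in> slLL"
  by (simp add: zero_prod_def slLL_iff par_zero)
lemma slLL_scale: "x \<in> slLL \<Longrightarrow> sl_scale c x \<in> slLL"
  by (cases x) (simp add: slLL_iff sl_scale_def par_const)
lemma slLL_br: assumes "x \<in> slLL" "y \<in> slLL" shows "sl_br x y \<in> slLL"
proof -
  obtain a b c a' b' c' where xy: "x = (a, b, c)" "y = (a', b', c')" by (cases x, cases y) auto
  have h: "par False a" "par False b" "par True c" "par False a'" "par False b'" "par True c'"
    using assms unfolding xy slLL_iff by auto
  have "par False (c * a')" "par False (a * c')" "par False (b * c')" "par False (c * b')"
       "par True (a * b')" "par True (b * a')"
    using par_mult[OF h(3) h(4)] par_mult[OF h(1) h(6)] par_mult[OF h(2) h(6)] par_mult[OF h(3) h(5)]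
          par_mult[OF h(1) h(5)] par_mult[OF h(2) h(4)] by simp_all
  then show ?thesis unfolding xy sl_br_def slLL_iff prod.case by (intro conjI par_2 par_diff)
qed

lemma Jraw_add: "x \<in> Jraw L \<Longrightarrow> y \<in> Jraw L \<Longrightarrow> x + y \<in> Jraw L"
  by (cases x; cases y) (simp add: Jraw_def pz_add)
lemma Jraw_diff: "x \<in> Jraw L \<Longrightarrow> y \<in> Jraw L \<Longrightarrow> x - y \<in> Jraw L"
  by (cases x; cases y) (simp add: Jraw_def pz_diff)
lemma Jraw_zero: "0 \<in> Jraw L"
  by (simp add: zero_prod_def Jraw_def pz_def)
lemma Jraw_scale: "x \<in> Jraw L \<Longrightarrow> sl_scale c x \<in> Jraw L"
  by (cases x) (simp add: Jraw_def sl_scale_def pz_const)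
lemma Jraw_brL: "x \<in> Jraw L \<Longrightarrow> sl_br x y \<in> Jraw L"
  by (cases x; cases y) (simp add: Jraw_def sl_br_def pz_2 pz_diff pz_multL)
lemma Jraw_brR: "y \<in> Jraw L \<Longrightarrow> sl_br x y \<in> Jraw L"
  by (cases x; cases y) (simp add: Jraw_def sl_br_def pz_2 pz_diff pz_multR)
lemma Jraw_mono: "K \<le> L \<Longrightarrow> x \<in> Jraw L \<Longrightarrow> x \<in> Jraw K"
  by (cases x) (auto simp: Jraw_def intro: pz_mono)
lemma Jraw_all: "(\<forall>L. x \<in> Jraw L) \<Longrightarrow> x = 0"
proof (cases x)
  case (fields a b d)
  assume "\<forall>L. x \<in> Jraw L"
  then have "\<forall>n. a $ n = 0 \<and> b $ n = 0 \<and> d $ n = 0"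
    unfolding fields Jraw_def pz_def by (metis (mono_tags, lifting) case_prod_conv lessI mem_Collect_eq)
  then show ?thesis unfolding fields zero_prod_def by (auto simp: fps_eq_iff)
qed


lemma h2_nth: "(h2 * F) $ n = F $ n / 2"
  by (simp add: h2_def)

lemma iota_nth:
  "fst (iota (p, lrefl p, q)) $ n = ev q $ n + ((-1)^n * ev p $ n - ev p $ n) / 2"
  "fst (snd (iota (p, lrefl p, q))) $ n = ev q $ n + (ev p $ n - (-1)^n * ev p $ n) / 2"
  "snd (snd (iota (p, lrefl p, q))) $ n = (ev p $ n + (-1)^n * ev p $ n) / 2"
  by (simp_all add: iota_def h2_nth ev_lrefl_nth)

lemma q_even: assumes "lrefl q = - q" "even n" shows "ev q $ n = 0"
proof -
  have "ev (lrefl q) $ n = ev q $ n" using assms(2) by (simp add: ev_lrefl_nth)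
  moreover have "ev (lrefl q) $ n = - ev q $ n" using assms(1) by (simp add: ev_uminus)
  ultimately show ?thesis by simp
qed

lemma iota_slLL: assumes "x \<in> OA" shows "iota x \<in> slLL"
proof -
  obtain p q where x: "x = (p, lrefl p, q)" "lrefl q = - q" using assms unfolding OA_iff by blast
  obtain A B D where i: "iota x = (A, B, D)" by (cases "iota x") auto
  have "\<forall>n. (even n \<longrightarrow> A $ n = 0 \<and> B $ n = 0) \<and> (odd n \<longrightarrow> D $ n = 0)"
  proof (intro allI conjI impI)
    fix n :: nat
    assume "even n" then show "A $ n = 0" "B $ n = 0"
      using iota_nth[of p q n] q_even[OF x(2)] unfolding x(1)[symmetric] i by simp_all
  next
    fix n :: nat
    assume "odd n" then show "D $ n = 0"
      using iota_nth[of p q n] unfolding x(1)[symmetric] i by simp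
  qed
  then show ?thesis unfolding i slLL_def by simp
qed

lemma OA_ideal_iff:
  assumes "p \<in> LP" "q \<in> LP" "lrefl q = - q"
  shows "(p, lrefl p, q) \<in> OA_ideal L \<longleftrightarrow> p \<in> tm1_ideal L \<and> q \<in> tm1_ideal L"
  using assms unfolding OA_ideal_def OA_iff by auto

lemma iota_Jraw: assumes "x \<in> OA" shows "x \<in> OA_ideal L \<longleftrightarrow> iota x \<in> Jraw L"
proof -
  obtain p q where x: "x = (p, lrefl p, q)" "p \<in> LP" "q \<in> LP" "lrefl q = - q"
    using assms unfolding OA_iff by blast
  obtain A B D where i: "iota x = (A, B, D)" by (cases "iota x") auto
  have c: "(ev p $ n = 0 \<and> ev q $ n = 0) \<longleftrightarrow> (A $ n = 0 \<and> B $ n = 0 \<and> D $ n = 0)" for n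
  proof (cases "even n")
    case True
    then show ?thesis using iota_nth[of p q n] q_even[OF x(4) True] unfolding x(1)[symmetric] i by simp
  next
    case False
    then have "A $ n = ev q $ n - ev p $ n" "B $ n = ev q $ n + ev p $ n" "D $ n = 0"
      using iota_nth[of p q n] unfolding x(1)[symmetric] i by (simp_all add: field_simps)
    then show ?thesis by (auto simp: algebra_simps)
  qed
  show ?thesis unfolding x(1) OA_ideal_iff[OF x(2-4)] ideal_iff[OF x(2)] ideal_iff[OF x(3)]
    using c unfolding x(1)[symmetric] i Jraw_def pz_def by auto
qed


lemma density: assumes "s \<in> slLL" shows "\<exists>x\<in>OA. iota x - s \<in> Jraw L"
proof -
  obtain a b d where s: "s = (a, b, d)" by (cases s) auto
  have pa: "even n \<Longrightarrow> a $ n = 0" "even n \<Longrightarrow> b $ n = 0" "odd n \<Longrightarrow> d $ n = 0" for n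
    using assms unfolding s slLL_def by auto
  obtain p where p: "p \<in> LP" "\<forall>j<L. ev p $ j = d $ j + (b $ j - a $ j) / 2"
    using jets[of L "\<lambda>j. d $ j + (b $ j - a $ j) / 2"] by blast
  obtain q0 where q0: "q0 \<in> LP" "\<forall>j<L. ev q0 $ j = (a $ j + b $ j) / 2"
    using jets[of L "\<lambda>j. (a $ j + b $ j) / 2"] by blast
  define q where "q = lscale (1/2) (q0 - lrefl q0)"
  have qLP: "q \<in> LP" unfolding q_def by (intro LP_lscale LP_diff q0(1) LP_lrefl)
  have qr: "lrefl q = - q" unfolding q_def
    by (simp add: lrefl_lscale lrefl_diff lscale_uminus[symmetric])
  have evq: "ev q $ j = (ev q0 $ j - (-1)^j * ev q0 $ j) / 2" for j
    unfolding q_def by (simp add: ev_lscale LP_diff LP_lrefl q0(1) ev_diff ev_lrefl_nth)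
  define x where "x = (p, lrefl p, q)"
  have xOA: "x \<in> OA" unfolding x_def OA_iff using p(1) qLP qr by blast
  obtain A B D where i: "iota x = (A, B, D)" by (cases "iota x") auto
  have "A $ n = a $ n \<and> B $ n = b $ n \<and> D $ n = d $ n" if "n < L" for n
  proof (cases "even n")
    case True
    then show ?thesis using iota_nth[of p q n] q_even[OF qr True] pa[of n] p(2) that
      unfolding x_def[symmetric] i by simp
  next
    case False
    then show ?thesis using iota_nth[of p q n] pa[of n] p(2) q0(2) evq[of n] that
      unfolding x_def[symmetric] i by (simp add: field_simps)
  qed
  then have "iota x - s \<in> Jraw L" unfolding i s Jraw_def pz_def by simp
  then show ?thesis using xOA by blast
qed


locale cos =
  fixes A :: "'a::ab_group_add set" and I :: "'a set"
  assumes sub: "I \<subseteq> A" and z: "0 \<in> I" and df: "\<And>u v. u \<in> I \<Longrightarrow> v \<in> I \<Longrightarrow> u - v \<in> I"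
begin

lemma neg: "u \<in> I \<Longrightarrow> - u \<in> I" using df[OF z, of u] by simp
lemma ad: "u \<in> I \<Longrightarrow> v \<in> I \<Longrightarrow> u + v \<in> I" using df[of u "- v"] neg by simp
lemma self: "x \<in> A \<Longrightarrow> x \<in> coset A I x" unfolding coset_def using z by simp
lemma eqI: assumes "x - y \<in> I" shows "coset A I x = coset A I y"
proof -
  have "w - x \<in> I \<longleftrightarrow> w - y \<in> I" for w
  proof
    assume "w - x \<in> I"
    moreover have "w - y = (w - x) + (x - y)" by simp
    ultimately show "w - y \<in> I" using ad[OF _ assms] by metis
  next
    assume "w - y \<in> I"
    moreover have "w - x = (w - y) - (x - y)" by simp
    ultimately show "w - x \<in> I" using df[OF _ assms] by metis
  qed
  then show ?thesis unfolding coset_def by auto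
qed
lemma eqD: "x \<in> A \<Longrightarrow> coset A I x = coset A I y \<Longrightarrow> x - y \<in> I"
  using self[of x] unfolding coset_def by blast
lemma memD: "w \<in> coset A I x \<Longrightarrow> w \<in> A \<and> w - x \<in> I" unfolding coset_def by simp
lemma quotE: "C \<in> quot A I \<Longrightarrow> \<exists>x\<in>A. C = coset A I x" unfolding quot_def by blast
lemma quot_mem: assumes "C \<in> quot A I" "w \<in> C" shows "C = coset A I w"
proof -
  obtain x where x: "x \<in> A" "C = coset A I x" using quotE[OF assms(1)] by blast
  then have "w - x \<in> I" using assms(2) memD[of w x] by blast
  then show ?thesis using x eqI by metis
qed
lemma quot_ne: "C \<in> quot A I \<Longrightarrow> \<exists>w. w \<in> C" using quotE self by blast
lemma cosetI: "x \<in> A \<Longrightarrow> coset A I x \<in> quot A I" unfolding quot_def by blast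

lemma qop2c:
  assumes "x \<in> A" "y \<in> A" "f x y \<in> A"
    and c: "\<And>x x' y y'. x \<in> A \<Longrightarrow> x' \<in> A \<Longrightarrow> y \<in> A \<Longrightarrow> y' \<in> A \<Longrightarrow> x - x' \<in> I \<Longrightarrow> y - y' \<in> I \<Longrightarrow> f x y - f x' y' \<in> I"
  shows "qop2 A I f (coset A I x) (coset A I y) = coset A I (f x y)"
proof
  show "qop2 A I f (coset A I x) (coset A I y) \<subseteq> coset A I (f x y)"
  proof
    fix w assume "w \<in> qop2 A I f (coset A I x) (coset A I y)"
    then obtain x' y' where w: "w \<in> A" "x' \<in> coset A I x" "y' \<in> coset A I y" "w - f x' y' \<in> I"
      unfolding qop2_def by blast
    have "f x' y' - f x y \<in> I" using memD[OF w(2)] memD[OF w(3)] c[of x' x y' y] assms by blast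
    moreover have "w - f x y = (w - f x' y') + (f x' y' - f x y)" by simp
    ultimately have "w - f x y \<in> I" using ad[OF w(4)] by metis
    then show "w \<in> coset A I (f x y)" unfolding coset_def using w by simp
  qed
next
  show "coset A I (f x y) \<subseteq> qop2 A I f (coset A I x) (coset A I y)"
  proof
    fix w assume "w \<in> coset A I (f x y)"
    then show "w \<in> qop2 A I f (coset A I x) (coset A I y)"
      unfolding qop2_def using memD self assms by blast
  qed
qed

lemma qop1c:
  assumes "x \<in> A" "g x \<in> A"
    and c: "\<And>x x'. x \<in> A \<Longrightarrow> x' \<in> A \<Longrightarrow> x - x' \<in> I \<Longrightarrow> g x - g x' \<in> I"
  shows "qop1 A I g (coset A I x) = coset A I (g x)"
proof
  show "qop1 A I g (coset A I x) \<subseteq> coset A I (g x)"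
  proof
    fix w assume "w \<in> qop1 A I g (coset A I x)"
    then obtain x' where w: "w \<in> A" "x' \<in> coset A I x" "w - g x' \<in> I"
      unfolding qop1_def by blast
    have "g x' - g x \<in> I" using memD[OF w(2)] c[of x' x] assms by blast
    moreover have "w - g x = (w - g x') + (g x' - g x)" by simp
    ultimately have "w - g x \<in> I" using ad[OF w(3)] by metis
    then show "w \<in> coset A I (g x)" unfolding coset_def using w by simp
  qed
next
  show "coset A I (g x) \<subseteq> qop1 A I g (coset A I x)"
  proof
    fix w assume "w \<in> coset A I (g x)"
    then show "w \<in> qop1 A I g (coset A I x)"
      unfolding qop1_def using memD self assms by blast
  qed
qed

end

lemma OA_ideal_sub: "OA_ideal L \<subseteq> OA" unfolding OA_ideal_def by auto

lemma I_iff: "x \<in> OA_ideal L \<longleftrightarrow> x \<in> OA \<and> iota x \<in> Jraw L"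
  using OA_ideal_sub iota_Jraw by blast

lemma cosOA: "cos OA (OA_ideal L)"
proof
  show "OA_ideal L \<subseteq> OA" by (rule OA_ideal_sub)
  show "0 \<in> OA_ideal L" unfolding I_iff by (simp add: OA_zero iota_zero Jraw_zero)
  show "u - v \<in> OA_ideal L" if "u \<in> OA_ideal L" "v \<in> OA_ideal L" for u v
    using that unfolding I_iff by (simp add: OA_diff iota_diff Jraw_diff)
qed

lemma cosSL: "cos slLL (slLL_filt L)"
proof
  show "slLL_filt L \<subseteq> slLL" unfolding filt_eq by blast
  show "0 \<in> slLL_filt L" unfolding filt_eq by (simp add: slLL_zero Jraw_zero)
  show "u - v \<in> slLL_filt L" if "u \<in> slLL_filt L" "v \<in> slLL_filt L" for u v
    using that unfolding filt_eq by (simp add: slLL_diff Jraw_diff)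
qed

lemma I_mono: "K \<le> L \<Longrightarrow> OA_ideal L \<subseteq> OA_ideal K"
  using Jraw_mono[of K L] I_iff[of _ L] I_iff[of _ K] by blast

lemma sl_scale_diff: "sl_scale c (u - v) = sl_scale c u - sl_scale c v"
  by (cases u; cases v) (simp add: sl_scale_def algebra_simps)

lemma sl_br_compat:
  assumes "u - u' \<in> Jraw L" "v - v' \<in> Jraw L"
  shows "sl_br u v - sl_br u' v' \<in> Jraw L"
proof -
  have e: "sl_br u v - sl_br u' v' = sl_br (u - u') v + sl_br u' (v - v')"
    by (cases u; cases v; cases u'; cases v') (simp add: sl_br_def algebra_simps)
  show ?thesis unfolding e by (intro Jraw_add Jraw_brL Jraw_brR assms)
qed

lemma Jraw_iff: "u \<in> Jraw L \<longleftrightarrow> (\<forall>n<L. fst u $ n = 0 \<and> fst (snd u) $ n = 0 \<and> snd (snd u) $ n = 0)"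
  by (cases u) (auto simp: Jraw_def pz_def)

lemma slLL_iff': "u \<in> slLL \<longleftrightarrow> (\<forall>n. (even n \<longrightarrow> fst u $ n = 0 \<and> fst (snd u) $ n = 0) \<and> (odd n \<longrightarrow> snd (snd u) $ n = 0))"
  by (cases u) (auto simp: slLL_def)


abbreviation "II \<equiv> OA_ideal"
abbreviation "JJ \<equiv> slLL_filt"

lemmas oa_self = cos.self[OF cosOA] and oa_eqI = cos.eqI[OF cosOA] and oa_eqD = cos.eqD[OF cosOA]
  and oa_memD = cos.memD[OF cosOA] and oa_quotE = cos.quotE[OF cosOA] and oa_quot_mem = cos.quot_mem[OF cosOA]
  and oa_quot_ne = cos.quot_ne[OF cosOA] and oa_cosetI = cos.cosetI[OF cosOA]
  and oa_qop2c = cos.qop2c[OF cosOA] and oa_qop1c = cos.qop1c[OF cosOA]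
  and oa_ad = cos.ad[OF cosOA] and oa_neg = cos.neg[OF cosOA]
lemmas sl_self = cos.self[OF cosSL] and sl_eqI = cos.eqI[OF cosSL] and sl_eqD = cos.eqD[OF cosSL]
  and sl_memD = cos.memD[OF cosSL] and sl_quotE = cos.quotE[OF cosSL]
  and sl_cosetI = cos.cosetI[OF cosSL]
  and sl_qop2c = cos.qop2c[OF cosSL] and sl_qop1c = cos.qop1c[OF cosSL]

lemma hat_quot: "X \<in> OAhat \<Longrightarrow> X L \<in> quot OA (II L)"
  unfolding OAhat_def OA_quot_def by blast

lemma hat_ne: "X \<in> OAhat \<Longrightarrow> \<exists>x. x \<in> X L"
  using oa_quot_ne hat_quot by blast

lemma hat_sub: "X \<in> OAhat \<Longrightarrow> x \<in> X L \<Longrightarrow> x \<in> OA"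
  using oa_quot_mem[OF hat_quot] oa_memD by metis

lemma hat_coset: "X \<in> OAhat \<Longrightarrow> x \<in> X L \<Longrightarrow> X L = coset OA (II L) x"
  using oa_quot_mem[OF hat_quot] by blast

lemma proj_coset:
  assumes "K \<le> L" "x \<in> OA"
  shows "OA_proj K (coset OA (II L) x) = coset OA (II K) x"
proof
  show "OA_proj K (coset OA (II L) x) \<subseteq> coset OA (II K) x"
  proof
    fix y assume "y \<in> OA_proj K (coset OA (II L) x)"
    then obtain x' where y: "y \<in> OA" "x' \<in> coset OA (II L) x" "y - x' \<in> II K"
      unfolding OA_proj_def by blast
    have "x' - x \<in> II K" using oa_memD[OF y(2)] I_mono[OF assms(1)] by blast
    moreover have "y - x = (y - x') + (x' - x)" by simp
    ultimately have "y - x \<in> II K" using oa_ad[OF y(3)] by metis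
    then show "y \<in> coset OA (II K) x" unfolding coset_def using y by simp
  qed
next
  show "coset OA (II K) x \<subseteq> OA_proj K (coset OA (II L) x)"
  proof
    fix y assume "y \<in> coset OA (II K) x"
    then show "y \<in> OA_proj K (coset OA (II L) x)"
      unfolding OA_proj_def using oa_memD oa_self[OF assms(2)] by blast
  qed
qed

lemma hat_compat:
  assumes "X \<in> OAhat" "K \<le> L" "x \<in> X L" "y \<in> X K"
  shows "iota x - iota y \<in> Jraw K"
proof -
  have xOA: "x \<in> OA" using hat_sub assms by blast
  have "X K = OA_proj K (X L)" using assms(1,2) unfolding OAhat_def by auto
  also have "\<dots> = coset OA (II K) x" using hat_coset[OF assms(1,3)] proj_coset[OF assms(2) xOA] by simp
  finally have "y - x \<in> II K" using assms(4) oa_memD by blast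
  then have "x - y \<in> II K" using oa_neg by fastforce
  then show ?thesis using I_iff iota_diff xOA hat_sub[OF assms(1,4)] by metis
qed

definition Phi :: "(nat \<Rightarrow> loop set) \<Rightarrow> sl" where
  "Phi X = (THE s. \<forall>L. \<forall>x\<in>X L. iota x - s \<in> Jraw L)"

lemma Phi_unique:
  assumes ne: "\<And>L. \<exists>z. z \<in> Z L" and s: "\<And>L z. z \<in> Z L \<Longrightarrow> iota z - s \<in> Jraw L"
  shows "Phi Z = s"
  unfolding Phi_def
proof (rule the_equality)
  show "\<forall>L. \<forall>x\<in>Z L. iota x - s \<in> Jraw L" using s by blast
next
  fix s' assume s': "\<forall>L. \<forall>x\<in>Z L. iota x - s' \<in> Jraw L"
  have "s - s' \<in> Jraw L" for L
  proof -
    obtain z where z: "z \<in> Z L" using ne by blast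
    have "(iota z - s') - (iota z - s) \<in> Jraw L" using Jraw_diff s s' z by blast
    then show ?thesis by simp
  qed
  then have "s - s' = 0" using Jraw_all by blast
  then show "s' = s" by simp
qed

lemma Phi_ex:
  assumes X: "X \<in> OAhat"
  shows "\<exists>s\<in>slLL. \<forall>L. \<forall>x\<in>X L. iota x - s \<in> Jraw L"
proof -
  define xs where "xs L = (SOME x. x \<in> X L)" for L
  have xs: "xs L \<in> X L" for L unfolding xs_def using hat_ne[OF X] by (metis someI_ex)
  define s where "s = (Abs_fps (\<lambda>n. fst (iota (xs (Suc n))) $ n),
                       Abs_fps (\<lambda>n. fst (snd (iota (xs (Suc n)))) $ n),
                       Abs_fps (\<lambda>n. snd (snd (iota (xs (Suc n)))) $ n))"
  have key: "fst (iota x) $ n = fst (iota (xs (Suc n))) $ n \<and>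
             fst (snd (iota x)) $ n = fst (snd (iota (xs (Suc n)))) $ n \<and>
             snd (snd (iota x)) $ n = snd (snd (iota (xs (Suc n)))) $ n"
    if "x \<in> X L" "n < L" for x L n
  proof -
    have "iota x - iota (xs (Suc n)) \<in> Jraw (Suc n)"
      using hat_compat[OF X _ that(1) xs] that(2) by simp
    then show ?thesis unfolding Jraw_iff by auto
  qed
  have "iota x - s \<in> Jraw L" if "x \<in> X L" for x L
    unfolding Jraw_iff using key[OF that] by (simp add: s_def)
  moreover have "s \<in> slLL"
    unfolding slLL_iff'
  proof (intro allI)
    fix n
    have "iota (xs (Suc n)) \<in> slLL" using iota_slLL hat_sub[OF X xs] by blast
    then show "(even n \<longrightarrow> fst s $ n = 0 \<and> fst (snd s) $ n = 0) \<and> (odd n \<longrightarrow> snd (snd s) $ n = 0)"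
      unfolding slLL_iff' s_def by simp
  qed
  ultimately show ?thesis by blast
qed

lemma Phi_props:
  assumes X: "X \<in> OAhat"
  shows "Phi X \<in> slLL" "x \<in> X L \<Longrightarrow> iota x - Phi X \<in> Jraw L"
proof -
  obtain s where s: "s \<in> slLL" "\<forall>L. \<forall>x\<in>X L. iota x - s \<in> Jraw L" using Phi_ex[OF X] by blast
  have "Phi X = s" by (rule Phi_unique) (use hat_ne[OF X] s in auto)
  then show "Phi X \<in> slLL" "x \<in> X L \<Longrightarrow> iota x - Phi X \<in> Jraw L" using s by auto
qed


lemma Phi_add:
  assumes X: "X \<in> OAhat" and Y: "Y \<in> OAhat"
  shows "Phi (OAhat_add X Y) = Phi X + Phi Y"
proof (rule Phi_unique)
  fix L
  obtain x y where xy: "x \<in> X L" "y \<in> Y L" using hat_ne X Y by blast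
  have o: "x \<in> OA" "y \<in> OA" using hat_sub X Y xy by blast+
  have "x + y \<in> OAhat_add X Y L"
    unfolding OAhat_add_def OAq_add_def qop2_def using xy o OA_add oa_self[of 0] OA_zero
    by (auto simp: coset_def intro!: bexI[OF _ xy(1)] bexI[OF _ xy(2)] cos.z[OF cosOA])
  then show "\<exists>z. z \<in> OAhat_add X Y L" by blast
next
  fix L z assume "z \<in> OAhat_add X Y L"
  then obtain x y where z: "z \<in> OA" "x \<in> X L" "y \<in> Y L" "z - (x + y) \<in> II L"
    unfolding OAhat_add_def OAq_add_def qop2_def by blast
  have o: "x \<in> OA" "y \<in> OA" using hat_sub X Y z by blast+
  have "iota z - (iota x + iota y) \<in> Jraw L"
    using z(4) I_iff iota_diff iota_add o z(1) OA_add by metis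
  moreover have "iota x - Phi X \<in> Jraw L" "iota y - Phi Y \<in> Jraw L" using Phi_props X Y z by blast+
  ultimately have "(iota z - (iota x + iota y)) + (iota x - Phi X) + (iota y - Phi Y) \<in> Jraw L"
    by (intro Jraw_add)
  then show "iota z - (Phi X + Phi Y) \<in> Jraw L" by (simp add: algebra_simps)
qed

lemma Phi_scale:
  assumes X: "X \<in> OAhat"
  shows "Phi (OAhat_scale c X) = sl_scale c (Phi X)"
proof (rule Phi_unique)
  fix L
  obtain x where xy: "x \<in> X L" using hat_ne X by blast
  have o: "x \<in> OA" using hat_sub X xy by blast
  have "loop_scale c x \<in> OAhat_scale c X L"
    unfolding OAhat_scale_def OAq_scale_def qop1_def using xy o OA_scale[OF o] cos.z[OF cosOA]
    by (auto intro!: bexI[OF _ xy])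
  then show "\<exists>z. z \<in> OAhat_scale c X L" by blast
next
  fix L z assume "z \<in> OAhat_scale c X L"
  then obtain x where z: "z \<in> OA" "x \<in> X L" "z - loop_scale c x \<in> II L"
    unfolding OAhat_scale_def OAq_scale_def qop1_def by blast
  have o: "x \<in> OA" using hat_sub X z by blast
  have "iota z - sl_scale c (iota x) \<in> Jraw L"
    using z(3) I_iff iota_diff iota_scale o z(1) OA_scale by metis
  moreover have "sl_scale c (iota x - Phi X) \<in> Jraw L" using Phi_props X z Jraw_scale by blast
  ultimately have "(iota z - sl_scale c (iota x)) + sl_scale c (iota x - Phi X) \<in> Jraw L"
    by (intro Jraw_add)
  then show "iota z - sl_scale c (Phi X) \<in> Jraw L" by (simp add: sl_scale_diff)
qed

lemma Phi_br:
  assumes X: "X \<in> OAhat" and Y: "Y \<in> OAhat"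
  shows "Phi (OAhat_br X Y) = sl_br (Phi X) (Phi Y)"
proof (rule Phi_unique)
  fix L
  obtain x y where xy: "x \<in> X L" "y \<in> Y L" using hat_ne X Y by blast
  have o: "x \<in> OA" "y \<in> OA" using hat_sub X Y xy by blast+
  have "loop_br x y \<in> OAhat_br X Y L"
    unfolding OAhat_br_def OAq_br_def qop2_def using xy o OA_br[OF o] cos.z[OF cosOA]
    by (auto intro!: bexI[OF _ xy(1)] bexI[OF _ xy(2)])
  then show "\<exists>z. z \<in> OAhat_br X Y L" by blast
next
  fix L z assume "z \<in> OAhat_br X Y L"
  then obtain x y where z: "z \<in> OA" "x \<in> X L" "y \<in> Y L" "z - loop_br x y \<in> II L"
    unfolding OAhat_br_def OAq_br_def qop2_def by blast
  have o: "x \<in> OA" "y \<in> OA" using hat_sub X Y z by blast+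
  have "iota z - sl_br (iota x) (iota y) \<in> Jraw L"
    using z(4) I_iff iota_diff iota_br o z(1) OA_br by metis
  moreover have "sl_br (iota x) (iota y) - sl_br (Phi X) (Phi Y) \<in> Jraw L"
    using Phi_props X Y z by (intro sl_br_compat) blast+
  ultimately have "(iota z - sl_br (iota x) (iota y)) + (sl_br (iota x) (iota y) - sl_br (Phi X) (Phi Y)) \<in> Jraw L"
    by (intro Jraw_add)
  then show "iota z - sl_br (Phi X) (Phi Y) \<in> Jraw L" by simp
qed

lemma Phi_inj: "inj_on Phi OAhat"
proof (rule inj_onI)
  fix X Y assume X: "X \<in> OAhat" and Y: "Y \<in> OAhat" and e: "Phi X = Phi Y"
  show "X = Y"
  proof
    fix L
    obtain x y where xy: "x \<in> X L" "y \<in> Y L" using hat_ne X Y by blast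
    have o: "x \<in> OA" "y \<in> OA" using hat_sub X Y xy by blast+
    have "(iota x - Phi X) - (iota y - Phi Y) \<in> Jraw L"
      using Phi_props X Y xy Jraw_diff by blast
    then have "iota (x - y) \<in> Jraw L" using e iota_diff o by simp
    then have "x - y \<in> II L" using I_iff OA_diff o by blast
    then show "X L = Y L" using hat_coset X Y xy oa_eqI by metis
  qed
qed

lemma Phi_surj: assumes s: "s \<in> slLL" shows "\<exists>X\<in>OAhat. Phi X = s"
proof -
  define xs where "xs L = (SOME x. x \<in> OA \<and> iota x - s \<in> Jraw L)" for L
  have xs: "xs L \<in> OA \<and> iota (xs L) - s \<in> Jraw L" for L
    unfolding xs_def using density[OF s, of L] by (metis (mono_tags, lifting) someI_ex)
  define X where "X L = coset OA (II L) (xs L)" for L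
  have d: "xs L - xs K \<in> II K" if "K \<le> L" for K L
  proof -
    have "(iota (xs L) - s) - (iota (xs K) - s) \<in> Jraw K"
      using xs Jraw_mono[OF that] Jraw_diff by blast
    then have "iota (xs L - xs K) \<in> Jraw K" using iota_diff xs by simp
    then show ?thesis using I_iff OA_diff xs by blast
  qed
  have XO: "X \<in> OAhat" unfolding OAhat_def OA_quot_def
  proof (intro CollectI conjI allI impI)
    fix L show "X L \<in> quot OA (II L)" unfolding X_def using oa_cosetI xs by blast
  next
    fix L K :: nat assume "K \<le> L"
    then show "OA_proj K (X L) = X K" unfolding X_def
      using proj_coset xs oa_eqI d by metis
  qed
  have "Phi X = s"
  proof (rule Phi_unique)
    show "\<exists>z. z \<in> X L" for L using hat_ne XO by blast
  next
    fix L z assume "z \<in> X L"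
    then have z: "z \<in> OA" "z - xs L \<in> II L" unfolding X_def using oa_memD by blast+
    then have "iota (z - xs L) \<in> Jraw L" using I_iff by blast
    then have "iota (z - xs L) + (iota (xs L) - s) \<in> Jraw L" using xs Jraw_add by blast
    then show "iota z - s \<in> Jraw L" using iota_diff z xs by simp
  qed
  then show ?thesis using XO by blast
qed

lemma Phi_bij: "bij_betw Phi OAhat slLL"
  unfolding bij_betw_def using Phi_inj Phi_props Phi_surj by blast


lemma filt_iff: "u \<in> JJ L \<longleftrightarrow> u \<in> slLL \<and> u \<in> Jraw L" unfolding filt_eq by blast

lemma Phi_filt: "Phi ` OAhat_filt L = JJ L"
proof
  show "Phi ` OAhat_filt L \<subseteq> JJ L"
  proof
    fix u assume "u \<in> Phi ` OAhat_filt L"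
    then obtain X where X: "X \<in> OAhat" "X L = coset OA (II L) 0" "u = Phi X"
      unfolding OAhat_filt_def psi_def by blast
    have "0 \<in> X L" using X(2) oa_self OA_zero by simp
    then have "iota 0 - Phi X \<in> Jraw L" using Phi_props X by blast
    then have "0 - (iota 0 - Phi X) \<in> Jraw L" using Jraw_diff Jraw_zero by blast
    then show "u \<in> JJ L" using Phi_props X by (simp add: filt_iff iota_zero)
  qed
next
  show "JJ L \<subseteq> Phi ` OAhat_filt L"
  proof
    fix s assume s: "s \<in> JJ L"
    then obtain X where X: "X \<in> OAhat" "Phi X = s" using Phi_surj filt_iff by blast
    obtain x where x: "x \<in> X L" using hat_ne X by blast
    have o: "x \<in> OA" using hat_sub X x by blast
    have "(iota x - s) + s \<in> Jraw L" using Phi_props X x s filt_iff Jraw_add by metis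
    then have "x - 0 \<in> II L" using I_iff o by simp
    then have "X L = coset OA (II L) 0" using hat_coset X x oa_eqI by metis
    then show "s \<in> Phi ` OAhat_filt L" using X unfolding OAhat_filt_def psi_def by blast
  qed
qed

definition Theta :: "nat \<Rightarrow> loop set \<Rightarrow> sl set" where
  "Theta L C = coset slLL (JJ L) (iota (SOME x. x \<in> C))"

lemma Theta_coset: assumes "x \<in> OA" shows "Theta L (coset OA (II L) x) = coset slLL (JJ L) (iota x)"
proof -
  define y where "y = (SOME y. y \<in> coset OA (II L) x)"
  have "y \<in> coset OA (II L) x" unfolding y_def using oa_self[OF assms] by (metis someI_ex)
  then have y: "y \<in> OA" "y - x \<in> II L" using oa_memD by blast+
  then have "iota y - iota x \<in> Jraw L" using I_iff iota_diff assms by metis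
  moreover have "iota y - iota x \<in> slLL" using slLL_diff iota_slLL y assms by blast
  ultimately have "iota y - iota x \<in> JJ L" using filt_iff by blast
  then show ?thesis unfolding Theta_def y_def[symmetric] using sl_eqI by blast
qed

lemma iota_compat: "x \<in> OA \<Longrightarrow> x' \<in> OA \<Longrightarrow> x - x' \<in> II L \<Longrightarrow> iota x - iota x' \<in> Jraw L"
  using I_iff iota_diff by metis

lemma Theta_iso:
  "is_lie_iso (OA_quot L) (OAq_add L) (OAq_scale L) (OAq_br L)
     (quot slLL (JJ L)) (qop2 slLL (JJ L) (+))
     (\<lambda>c. qop1 slLL (JJ L) (sl_scale c)) (qop2 slLL (JJ L) sl_br) (Theta L)"
proof -
  have qa: "OAq_add L (coset OA (II L) x) (coset OA (II L) y) = coset OA (II L) (x + y)"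
    if "x \<in> OA" "y \<in> OA" for x y
    unfolding OAq_add_def
  proof (rule oa_qop2c)
    fix x x' y y' assume h: "x \<in> OA" "x' \<in> OA" "y \<in> OA" "y' \<in> OA" "x - x' \<in> II L" "y - y' \<in> II L"
    have "(x + y) - (x' + y') = (x - x') + (y - y')" by simp
    then show "(x + y) - (x' + y') \<in> II L" using oa_ad h by metis
  qed (use that OA_add in auto)
  have qs: "OAq_scale L c (coset OA (II L) x) = coset OA (II L) (loop_scale c x)"
    if "x \<in> OA" for x c
    unfolding OAq_scale_def
  proof (rule oa_qop1c)
    fix x x' assume h: "x \<in> OA" "x' \<in> OA" "x - x' \<in> II L"
    have "iota (loop_scale c x - loop_scale c x') = sl_scale c (iota x - iota x')"
      using h by (simp add: iota_diff OA_scale iota_scale sl_scale_diff)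
    moreover have "sl_scale c (iota x - iota x') \<in> Jraw L" using Jraw_scale iota_compat[OF h] by blast
    moreover have "loop_scale c x - loop_scale c x' \<in> OA" using h by (intro OA_diff OA_scale)
    ultimately show "loop_scale c x - loop_scale c x' \<in> II L" unfolding I_iff by simp
  qed (use that OA_scale in auto)
  have qb: "OAq_br L (coset OA (II L) x) (coset OA (II L) y) = coset OA (II L) (loop_br x y)"
    if "x \<in> OA" "y \<in> OA" for x y
    unfolding OAq_br_def
  proof (rule oa_qop2c)
    fix x x' y y' assume h: "x \<in> OA" "x' \<in> OA" "y \<in> OA" "y' \<in> OA" "x - x' \<in> II L" "y - y' \<in> II L"
    have "iota (loop_br x y - loop_br x' y') = sl_br (iota x) (iota y) - sl_br (iota x') (iota y')"
      using h by (simp add: iota_diff OA_br iota_br)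
    moreover have "sl_br (iota x) (iota y) - sl_br (iota x') (iota y') \<in> Jraw L"
      using iota_compat[of x x'] iota_compat[of y y'] h by (intro sl_br_compat) auto
    moreover have "loop_br x y - loop_br x' y' \<in> OA" using h by (intro OA_diff OA_br)
    ultimately show "loop_br x y - loop_br x' y' \<in> II L" unfolding I_iff by simp
  qed (use that OA_br in auto)
  have sa: "qop2 slLL (JJ L) (+) (coset slLL (JJ L) u) (coset slLL (JJ L) v) = coset slLL (JJ L) (u + v)"
    if "u \<in> slLL" "v \<in> slLL" for u v
  proof (rule sl_qop2c)
    fix x x' y y' assume h: "x \<in> slLL" "x' \<in> slLL" "y \<in> slLL" "y' \<in> slLL" "x - x' \<in> JJ L" "y - y' \<in> JJ L"
    have "(x + y) - (x' + y') = (x - x') + (y - y')" by simp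
    then show "(x + y) - (x' + y') \<in> JJ L" using cos.ad[OF cosSL] h by metis
  qed (use that slLL_add in auto)
  have ss: "qop1 slLL (JJ L) (sl_scale c) (coset slLL (JJ L) u) = coset slLL (JJ L) (sl_scale c u)"
    if "u \<in> slLL" for u c
  proof (rule sl_qop1c)
    fix x x' assume h: "x \<in> slLL" "x' \<in> slLL" "x - x' \<in> JJ L"
    have "sl_scale c (x - x') \<in> slLL" using h by (intro slLL_scale slLL_diff)
    moreover have "sl_scale c (x - x') \<in> Jraw L" using h unfolding filt_iff by (intro Jraw_scale) auto
    ultimately show "sl_scale c x - sl_scale c x' \<in> JJ L" unfolding filt_iff sl_scale_diff by blast
  qed (use that slLL_scale in auto)
  have sb: "qop2 slLL (JJ L) sl_br (coset slLL (JJ L) u) (coset slLL (JJ L) v) = coset slLL (JJ L) (sl_br u v)"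
    if "u \<in> slLL" "v \<in> slLL" for u v
  proof (rule sl_qop2c)
    fix x x' y y' assume h: "x \<in> slLL" "x' \<in> slLL" "y \<in> slLL" "y' \<in> slLL" "x - x' \<in> JJ L" "y - y' \<in> JJ L"
    have "sl_br x y - sl_br x' y' \<in> slLL" using h by (intro slLL_diff slLL_br)
    moreover have "sl_br x y - sl_br x' y' \<in> Jraw L" using h unfolding filt_iff by (intro sl_br_compat) auto
    ultimately show "sl_br x y - sl_br x' y' \<in> JJ L" unfolding filt_iff by blast
  qed (use that slLL_br in auto)
  have inj: "inj_on (Theta L) (OA_quot L)"
  proof (rule inj_onI)
    fix C D assume C: "C \<in> OA_quot L" and D: "D \<in> OA_quot L" and e: "Theta L C = Theta L D"
    obtain x y where xy: "x \<in> OA" "C = coset OA (II L) x" "y \<in> OA" "D = coset OA (II L) y"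
      using C D oa_quotE unfolding OA_quot_def by metis
    have "coset slLL (JJ L) (iota x) = coset slLL (JJ L) (iota y)"
      using e Theta_coset[OF xy(1), of L] Theta_coset[OF xy(3), of L] xy(2,4) by simp
    then have "iota x - iota y \<in> JJ L" using sl_eqD[OF iota_slLL[OF xy(1)]] by blast
    then have "iota (x - y) \<in> Jraw L" using iota_diff[OF xy(1,3)] filt_iff by simp
    then have "x - y \<in> II L" using I_iff OA_diff[OF xy(1,3)] by blast
    then show "C = D" using xy oa_eqI by metis
  qed
  have img: "Theta L ` OA_quot L = quot slLL (JJ L)"
  proof
    show "Theta L ` OA_quot L \<subseteq> quot slLL (JJ L)"
    proof
      fix C' assume "C' \<in> Theta L ` OA_quot L"
      then obtain x where x: "x \<in> OA" "C' = Theta L (coset OA (II L) x)"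
        using oa_quotE unfolding OA_quot_def by blast
      then show "C' \<in> quot slLL (JJ L)" using Theta_coset[OF x(1)] sl_cosetI[OF iota_slLL[OF x(1)]] by simp
    qed
  next
    show "quot slLL (JJ L) \<subseteq> Theta L ` OA_quot L"
    proof
      fix C' assume "C' \<in> quot slLL (JJ L)"
      then obtain s where s: "s \<in> slLL" "C' = coset slLL (JJ L) s" using sl_quotE by blast
      obtain x where x: "x \<in> OA" "iota x - s \<in> Jraw L" using density[OF s(1)] by blast
      have "iota x - s \<in> JJ L" using filt_iff x slLL_diff iota_slLL s by blast
      then have "Theta L (coset OA (II L) x) = C'" using Theta_coset[OF x(1)] s(2) sl_eqI by simp
      then show "C' \<in> Theta L ` OA_quot L" using oa_cosetI x unfolding OA_quot_def by blast
    qed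
  qed
  show ?thesis unfolding is_lie_iso_def bij_betw_def
  proof (intro conjI inj img ballI allI)
    fix C D assume "C \<in> OA_quot L" "D \<in> OA_quot L"
    then obtain x y where xy: "x \<in> OA" "C = coset OA (II L) x" "y \<in> OA" "D = coset OA (II L) y"
      using oa_quotE unfolding OA_quot_def by metis
    show "Theta L (OAq_add L C D) = qop2 slLL (JJ L) (+) (Theta L C) (Theta L D)"
      using xy by (simp add: qa Theta_coset OA_add sa iota_slLL iota_add)
    show "Theta L (OAq_br L C D) = qop2 slLL (JJ L) sl_br (Theta L C) (Theta L D)"
      using xy by (simp add: qb Theta_coset OA_br sb iota_slLL iota_br)
  next
    fix c C assume "C \<in> OA_quot L"
    then obtain x where xy: "x \<in> OA" "C = coset OA (II L) x"
      using oa_quotE unfolding OA_quot_def by metis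
    show "Theta L (OAq_scale L c C) = qop1 slLL (JJ L) (sl_scale c) (Theta L C)"
      using xy by (simp add: qs Theta_coset OA_scale ss iota_slLL iota_scale)
  qed
qed

lemma Theta_psi: "X \<in> OAhat \<Longrightarrow> Theta L (psi L X) = coset slLL (JJ L) (Phi X)"
proof -
  assume X: "X \<in> OAhat"
  obtain x where x: "x \<in> X L" using hat_ne X by blast
  have o: "x \<in> OA" using hat_sub X x by blast
  have "iota x - Phi X \<in> slLL" using Phi_props(1)[OF X] iota_slLL[OF o] by (intro slLL_diff)
  then have "iota x - Phi X \<in> JJ L" using filt_iff Phi_props(2)[OF X x] by blast
  then show ?thesis unfolding psi_def using hat_coset[OF X x] Theta_coset[OF o, of L] sl_eqI by simp
qed

theorem theorem5:
  shows "\<exists>\<Phi>.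
    is_lie_iso OAhat OAhat_add OAhat_scale OAhat_br slLL (+) sl_scale sl_br \<Phi> \<and>
    (\<forall>L. \<Phi> ` OAhat_filt L = slLL_filt L) \<and>
    (\<forall>L. \<exists>\<Theta>.
       is_lie_iso (OA_quot L) (OAq_add L) (OAq_scale L) (OAq_br L)
         (quot slLL (slLL_filt L)) (qop2 slLL (slLL_filt L) (+))
         (\<lambda>c. qop1 slLL (slLL_filt L) (sl_scale c)) (qop2 slLL (slLL_filt L) sl_br) \<Theta> \<and>
       (\<forall>X\<in>OAhat. \<Theta> (psi L X) = coset slLL (slLL_filt L) (\<Phi> X)))"
proof (intro exI[of _ Phi] conjI allI)
  show "is_lie_iso OAhat OAhat_add OAhat_scale OAhat_br slLL (+) sl_scale sl_br Phi"
    unfolding is_lie_iso_def using Phi_bij Phi_add Phi_scale Phi_br by blast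
  show "Phi ` OAhat_filt L = slLL_filt L" for L by (rule Phi_filt)
  show "\<exists>\<Theta>. is_lie_iso (OA_quot L) (OAq_add L) (OAq_scale L) (OAq_br L)
         (quot slLL (slLL_filt L)) (qop2 slLL (slLL_filt L) (+))
         (\<lambda>c. qop1 slLL (slLL_filt L) (sl_scale c)) (qop2 slLL (slLL_filt L) sl_br) \<Theta> \<and>
       (\<forall>X\<in>OAhat. \<Theta> (psi L X) = coset slLL (slLL_filt L) (Phi X))" for L
    using Theta_iso[of L] Theta_psi by blast
qed


end
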